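(* For all sufficiently large $\alpha$, every error-free uncertain priors coding scheme $(E,D)$ (possibly using the shared random string) has, for some pair $(P,Q)\in\mathcal{F}_\alpha$, expected codeword length $\mathbb{E}_{x\sim P,R}[|E(x,\alpha,R,P)|]\geq 2\log k-2\log\log k$, where $k$ is as in the definition of $\mathcal{F}_\alpha$.
   Context: All logarithms are base 2. For $\alpha\geq1$, $P,Q\in\Delta(M)$ are $\alpha$-close if $\frac{1}{\alpha}Q(x)\leq P(x)\leq\alpha Q(x)$ for all $x\in M$. An error-free uncertain priors coding scheme is a pair $E:M\times\mathbb{N}\times\{0,1\}^{\mathbb{N}}\times\Delta(M)\to\{0,1\}^*$, $D:\{0,1\}^*\times\mathbb{N}\times\{0,1\}^{\mathbb{N}}\times\Delta(M)\to M$ such that for every $x\in M$, $\alpha\in\mathbb{N}$, $R\in\{0,1\}^{\mathbb{N}}$, $P\in\Delta(M)$ and every $Q$ $\alpha$-close to $P$, $D(E(x,\alpha,R,P),\alpha,R,Q)=x$; $R$ is uniformly random in expectations. The family $\mathcal{F}_\alpha$: let $k$ be the largest integer with $k\sqrt{\log k}\leq\alpha$, and let $M$ be a message set of size $k^2+1$. For each $m\in M$ and $S\subseteq M$ with $|S|=k+1$, $m\in S$, define $P_{m,S}(m)=1-1/\log k$, $P_{m,S}(x)=1/(k^2\log k)$ for $x\neq m$; $Q_S(x)=1/(k\sqrt{\log k})$ for $x\in S$ and $Q_S(x)=\frac{1}{k^2-k}\left(1-\frac{k+1}{k\sqrt{\log k}}\right)$ for $x\notin S$. $\mathcal{F}_\alpha$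 is the set of all pairs $(P_{m,S},Q_S)$; for sufficiently large $\alpha$ each such pair is $\alpha$-close. *)

theory Defs
  imports "HOL-Probability.Probability"
begin

definition coins :: "(nat \<Rightarrow> bool) measure" where
  "coins = PiM UNIV (\<lambda>_. measure_pmf (pmf_of_set (UNIV :: bool set)))"

definition distr_on :: "'a set \<Rightarrow> ('a \<Rightarrow> real) set" where
  "distr_on M = {P. (\<forall>x\<in>M. 0 \<le> P x) \<and> (\<forall>x. x \<notin> M \<longrightarrow> P x = 0) \<and> sum P M = 1}"

definition alpha_close :: "'a set \<Rightarrow> real \<Rightarrow> ('a \<Rightarrow> real) \<Rightarrow> ('a \<Rightarrow> real) \<Rightarrow> bool" where
  "alpha_close M \<alpha> P Q \<longleftrightarrow> (\<forall>x\<in>M. Q x / \<alpha> \<le> P x \<and> P x \<le> \<alpha> * Q x)"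

definition error_free_scheme ::
  "'a set \<Rightarrow> ('a \<Rightarrow> nat \<Rightarrow> (nat \<Rightarrow> bool) \<Rightarrow> ('a \<Rightarrow> real) \<Rightarrow> bool list)
          \<Rightarrow> (bool list \<Rightarrow> nat \<Rightarrow> (nat \<Rightarrow> bool) \<Rightarrow> ('a \<Rightarrow> real) \<Rightarrow> 'a) \<Rightarrow> bool" where
  "error_free_scheme M E D \<longleftrightarrow>
     (\<forall>x\<in>M. \<forall>\<alpha>::nat. \<forall>R. \<forall>P\<in>distr_on M. \<forall>Q\<in>distr_on M.
        alpha_close M (real \<alpha>) P Q \<longrightarrow> D (E x \<alpha> R P) \<alpha> R Q = x)"

definition kof :: "nat \<Rightarrow> nat" where
  "kof \<alpha> = (GREATEST k::nat. real k * sqrt (log 2 (real k)) \<le> real \<alpha>)"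

definition P_mS :: "'a set \<Rightarrow> nat \<Rightarrow> 'a \<Rightarrow> 'a \<Rightarrow> real" where
  "P_mS M k m x =
     (if x \<notin> M then 0
      else if x = m then 1 - 1 / log 2 (real k)
      else 1 / ((real k)\<^sup>2 * log 2 (real k)))"

definition Q_S :: "'a set \<Rightarrow> nat \<Rightarrow> 'a set \<Rightarrow> 'a \<Rightarrow> real" where
  "Q_S M k S x =
     (if x \<notin> M then 0
      else if x \<in> S then 1 / (real k * sqrt (log 2 (real k)))
      else (1 / ((real k)\<^sup>2 - real k)) * (1 - (real k + 1) / (real k * sqrt (log 2 (real k)))))"

definition family :: "'a set \<Rightarrow> nat \<Rightarrow> (('a \<Rightarrow> real) \<times> ('a \<Rightarrow> real)) set" where
  "family M \<alpha> = {(P_mS M (kof \<alpha>) m, Q_S M (kof \<alpha>) S) | m S.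
                    m \<in> M \<and> S \<subseteq> M \<and> card S = kof \<alpha> + 1 \<and> m \<in> S}"

definition exp_len ::
  "'a set \<Rightarrow> ('a \<Rightarrow> nat \<Rightarrow> (nat \<Rightarrow> bool) \<Rightarrow> ('a \<Rightarrow> real) \<Rightarrow> bool list)
     \<Rightarrow> nat \<Rightarrow> ('a \<Rightarrow> real) \<Rightarrow> ennreal" where
  "exp_len M E \<alpha> P = (\<Sum>x\<in>M. ennreal (P x) * (\<integral>\<^sup>+ R. ennreal (real (length (E x \<alpha> R P))) \<partial>coins))"

end

theory Submission
  imports Defs
begin


lemma card_short_lists: "card {xs::bool list. length xs \<le> t} \<le> 2^(t+1)" "finite {xs::bool list. length xs \<le> t}"
proof -
  have "{xs::bool list. length xs \<le> t} \<subseteq> (\<Union>n\<le>t. {xs. set xs \<subseteq> UNIV \<and> length xs = n})" by auto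
  moreover have fin: "finite (\<Union>n\<le>t. {xs::bool list. set xs \<subseteq> UNIV \<and> length xs = n})"
    using finite_lists_length_eq[of "UNIV::bool set"] by auto
  ultimately show "finite {xs::bool list. length xs \<le> t}" using finite_subset by blast
  have "card {xs::bool list. length xs \<le> t} \<le> card (\<Union>n\<le>t. {xs::bool list. set xs \<subseteq> UNIV \<and> length xs = n})"
    using fin \<open>{xs::bool list. length xs \<le> t} \<subseteq> _\<close> card_mono by blast
  also have "\<dots> \<le> (\<Sum>n\<le>t. card {xs::bool list. set xs \<subseteq> UNIV \<and> length xs = n})"
    by (rule card_UN_le) simp
  also have "\<dots> = (\<Sum>n\<le>t. 2^n)"
  proof (intro sum.cong refl)
    fix n show "card {xs::bool list. set xs \<subseteq> UNIV \<and> length xs = n} = 2^n"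
      using card_lists_length_eq[of "UNIV::bool set" n] by simp
  qed
  also have "\<dots> < 2^(t+1)" by (induction t) auto
  finally show "card {xs::bool list. length xs \<le> t} \<le> 2^(t+1)" by simp
qed

lemma sum_len_T:
  fixes g :: "'a \<Rightarrow> bool list"
  assumes fin: "finite M" and inj: "inj_on g M"
  shows "real (\<Sum>x\<in>M. length (g x)) \<ge> real T * card M - 2^(T+1)"
proof -
  have "(\<Sum>x\<in>M. length (g x)) \<ge> (\<Sum>x\<in>M. \<Sum>t<T. if t < length (g x) then 1 else 0)"
  proof (rule sum_mono)
    fix x show "(\<Sum>t<T. if t < length (g x) then 1 else 0) \<le> length (g x)"
    proof -
      have "(\<Sum>t<T. if t < length (g x) then 1 else (0::nat)) = card ({..<T} \<inter> {..<length (g x)})"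
        by (simp add: sum.If_cases lessThan_def)
      also have "\<dots> \<le> card {..<length (g x)}" by (rule card_mono) auto
      finally show ?thesis by simp
    qed
  qed
  also have "(\<Sum>x\<in>M. \<Sum>t<T. if t < length (g x) then 1 else (0::nat)) = (\<Sum>t<T. card {x\<in>M. t < length (g x)})"
    by (subst sum.swap) (simp add: sum.If_cases fin Int_def conj_commute)
  finally have A: "real (\<Sum>t<T. card {x\<in>M. t < length (g x)}) \<le> real (\<Sum>x\<in>M. length (g x))" by linarith
  have B: "real (card {x\<in>M. t < length (g x)}) \<ge> real (card M) - 2^(t+1)" for t
  proof -
    have "card M = card {x\<in>M. t < length (g x)} + card {x\<in>M. \<not> t < length (g x)}"
    proof -
      have "card M = card ({x\<in>M. t < length (g x)} \<union> {x\<in>M. \<not> t < length (g x)})"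
        by (rule arg_cong[where f=card]) auto
      also have "\<dots> = card {x\<in>M. t < length (g x)} + card {x\<in>M. \<not> t < length (g x)}"
        by (rule card_Un_disjoint) (use fin in auto)
      finally show ?thesis .
    qed
    moreover have "card {x\<in>M. \<not> t < length (g x)} = card (g ` {x\<in>M. \<not> t < length (g x)})"
      by (rule card_image[symmetric]) (rule inj_on_subset[OF inj], auto)
    moreover have "card (g ` {x\<in>M. \<not> t < length (g x)}) \<le> card {xs::bool list. length xs \<le> t}"
      by (rule card_mono[OF card_short_lists(2)]) auto
    ultimately have "card M \<le> card {x\<in>M. t < length (g x)} + 2^(t+1)" using card_short_lists(1)[of t]
      by linarith
    from of_nat_mono[OF this, where 'a=real] show ?thesis by simp
  qed
  have "(\<Sum>t<T. real (card M) - 2^(t+1)) \<le> (\<Sum>t<T. real (card {x\<in>M. t < length (g x)}))"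
    by (rule sum_mono) (rule B)
  moreover have "(\<Sum>t<T. real (card M) - 2^(t+1)) \<ge> real T * card M - 2^(T+1)"
  proof -
    have "(\<Sum>t<T. (2::real)^(t+1)) \<le> 2^(T+1)" by (induction T) auto
    thus ?thesis by (simp add: sum_subtractf)
  qed
  ultimately show ?thesis using A by simp
qed


lemma num_facts:
  fixes K l s a :: real
  assumes K: "K \<ge> 65536" and l: "l \<ge> 16" and s: "s * s = l" "s \<ge> 4" and lK: "l < K" and a: "K * s \<le> a"
  shows "(1 / (K * s)) / a \<le> 1 - 1 / l"
    "1 - 1/l \<le> a * (1 / (K * s))"
    "(1 / (K * s)) / a \<le> 1 / (K\<^sup>2 * l)"
    "1 / (K\<^sup>2 * l) \<le> a * (1 / (K * s))"
    "(1 / (K\<^sup>2 - K) * (1 - (K + 1) / (K * s))) / a \<le> 1 / (K\<^sup>2 * l)"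
    "1 / (K\<^sup>2 * l) \<le> a * (1 / (K\<^sup>2 - K) * (1 - (K + 1) / (K * s)))"
    "0 \<le> 1 / (K\<^sup>2 - K) * (1 - (K + 1) / (K * s))"
    "0 \<le> 1 - 1/l" "0 \<le> 1 / (K\<^sup>2 * l)" "0 \<le> 1 / (K * s)"
proof -
  have Kp: "K > 0" and sp: "s > 0" and lp: "l > 0" using K s l by auto
  have Ksge: "K * s \<ge> 262144" using mult_mono[of 65536 K 4 s] K s by simp
  have ap: "a > 0" using Ksge a by linarith
  have Ks1: "a * (1 / (K * s)) \<ge> 1" using a Kp sp by (simp add: field_simps)
  have l1: "1/l \<le> 1" using l by simp
  have inv1: "1 / (K * s) \<le> 1" using Ksge by (simp add: field_simps)
  show "0 \<le> 1 - 1/l" using l1 by simp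
  show "0 \<le> 1 / (K\<^sup>2 * l)" using lp by simp
  show "0 \<le> 1 / (K * s)" using Kp sp by simp
  show "1 - 1/l \<le> a * (1 / (K * s))" using Ks1 lp divide_pos_pos[of 1 l] by linarith
  show "1 / (K\<^sup>2 * l) \<le> a * (1 / (K * s))"
  proof -
    have "1 / (K\<^sup>2 * l) \<le> 1" using mult_mono[of 1 "K\<^sup>2" 1 l] one_le_power[of K 2] K l by simp
    thus ?thesis using Ks1 by linarith
  qed
  show "(1 / (K * s)) / a \<le> 1 / (K\<^sup>2 * l)"
  proof -
    have "(1 / (K * s)) / a \<le> (1 / (K * s)) / (K * s)"
      by (rule divide_left_mono) (use a Kp sp ap in \<open>auto intro: mult_pos_pos\<close>)
    also have "\<dots> = 1 / (K\<^sup>2 * l)" using s by (simp add: field_simps power2_eq_square)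
    finally show ?thesis .
  qed
  show "(1 / (K * s)) / a \<le> 1 - 1 / l"
  proof -
    have "(1 / (K * s)) / a \<le> 1 / (K * s)" using ap inv1 Kp sp
      using divide_left_mono[of 1 a "1 / (K * s)"] Ksge a by simp
    moreover have "1/l \<le> 1/16" using l by (simp add: field_simps)
    moreover have "1 / (K * s) \<le> 1/2" using Ksge by (simp add: field_simps)
    ultimately show ?thesis by linarith
  qed
  define b where "b = 1 / (K\<^sup>2 - K) * (1 - (K + 1) / (K * s))"
  have KK: "K\<^sup>2 - K > 0" using mult_right_mono[of 2 K K] K by (simp add: power2_eq_square)
  have frac: "(K + 1) / (K * s) \<le> 1/2"
  proof -
    have "K + 1 \<le> 2 * K" using K by simp
    also have "2 * K \<le> (K * s) / 2" using mult_left_mono[of 4 s K] s Kp by simp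
    finally show ?thesis using Kp sp by (simp add: field_simps)
  qed
  show "0 \<le> 1 / (K\<^sup>2 - K) * (1 - (K + 1) / (K * s))" using KK frac by (intro mult_nonneg_nonneg) (simp, linarith)
  have bup: "b \<le> 1 / (K\<^sup>2 - K)" unfolding b_def
    by (rule mult_left_le) (use Kp sp KK in auto)
  have blow: "b \<ge> 1 / (2 * K\<^sup>2)"
  proof -
    have "1 / (2 * K\<^sup>2) = 1 / K\<^sup>2 * (1/2)" by simp
    also have "\<dots> \<le> 1 / (K\<^sup>2 - K) * (1 - (K + 1) / (K * s))"
      by (rule mult_mono) (use KK frac Kp in \<open>auto simp: field_simps\<close>)
    finally show ?thesis unfolding b_def .
  qed
  have b0: "0 \<le> b" by (rule order.trans[OF _ blow]) simp
  have sK: "2 * s \<le> K"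
  proof -
    have "(2 * s)*(2 * s) = 4 * l" using s by simp
    also have "\<dots> \<le> K * K" using mult_mono[of 4 K l K] lK K l by simp
    finally show ?thesis using power2_le_imp_le[of "2 * s" K] Kp by (simp add: power2_eq_square)
  qed
  show "b / a \<le> 1 / (K\<^sup>2 * l)" unfolding b_def[symmetric]
  proof -
    have "b / a \<le> b / (K * s)" using b0 KK by (intro divide_left_mono) (use a Kp sp ap in \<open>auto intro: mult_pos_pos\<close>)
    also have "\<dots> \<le> (1 / (K\<^sup>2 - K)) / (K * s)" by (intro divide_right_mono bup) (use Kp sp in auto)
    also have "\<dots> \<le> 1 / (K\<^sup>2 * l)"
    proof -
      have "K\<^sup>2 * l \<le> (K\<^sup>2 - K) * (K * s)"
      proof -
        have "K\<^sup>2 * l = K * K * s * s" using s by (simp add: power2_eq_square)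
        also have "\<dots> \<le> K * (K - 1) * s * K"
        proof -
          have "s \<le> K - 1" using sK s(2) by linarith
          hence "K * K * s * s \<le> K * K * s * (K - 1)"
            using mult_left_mono[of s "K-1" "K * K * s"] Kp sp by simp
          thus ?thesis by (simp add: algebra_simps)
        qed
        also have "\<dots> = (K\<^sup>2 - K) * (K * s)" by (simp add: power2_eq_square algebra_simps)
        finally show ?thesis .
      qed
      thus ?thesis using KK Kp sp lp by (simp add: field_simps)
    qed
    finally show "b / a \<le> 1 / (K\<^sup>2 * l)" .
  qed
  show "1 / (K\<^sup>2 * l) \<le> a * b" unfolding b_def[symmetric]
  proof -
    have "1 / (K\<^sup>2 * l) \<le> (K * s) * (1 / (2 * K\<^sup>2))"
    proof -
      have "2 * K\<^sup>2 \<le> K\<^sup>2 * l * (K * s)"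
      proof -
        have "K * s \<ge> 1" using Ksge by simp
        hence "K\<^sup>2 * l * (K * s) \<ge> K\<^sup>2 * l" using Kp lp mult_left_mono[of 1 "K * s" "K\<^sup>2 * l"] by simp
        moreover have "K\<^sup>2 * l \<ge> 2 * K\<^sup>2" using l Kp by (simp add: mult_left_mono)
        ultimately show ?thesis by linarith
      qed
      thus ?thesis using Kp sp lp by (simp add: field_simps)
    qed
    also have "\<dots> \<le> a * b" by (rule mult_mono) (use a blow Kp ap in auto)
    finally show ?thesis .
  qed
qed

lemma l65536: "log 2 (65536::real) = 16" "sqrt (16::real) = 4"
proof -
  have "log 2 ((2::real)^16) = 16" by (subst log_nat_power) simp_all
  moreover have "(2::real)^16 = 65536" by simp
  ultimately show "log 2 (65536::real) = 16" by simp
  have "(16::real) = 4\<^sup>2" by simp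
  thus "sqrt (16::real) = 4" by (metis real_sqrt_abs abs_numeral)
qed

lemma k_facts:
  assumes k: "k \<ge> (65536::nat)"
  shows "log 2 (real k) \<ge> 16" "log 2 (real k) < real k"
    "sqrt (log 2 (real k)) * sqrt (log 2 (real k)) = log 2 (real k)"
    "sqrt (log 2 (real k)) \<ge> 4"
proof -
  have "log 2 (65536::real) \<le> log 2 (real k)" using k by (subst log_le_cancel_iff) auto
  thus l16: "log 2 (real k) \<ge> 16" using l65536 by simp
  have "real k < 2 ^ k" by (metis of_nat_less_iff of_nat_numeral of_nat_power less_exp)
  hence "log 2 (real k) < log 2 (2 ^ k)" using k by (subst log_less_cancel_iff) auto
  thus "log 2 (real k) < real k" by (simp add: log_nat_power)
  show "sqrt (log 2 (real k)) * sqrt (log 2 (real k)) = log 2 (real k)" using l16 by simp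
  have "sqrt 16 \<le> sqrt (log 2 (real k))" using l16 by (subst real_sqrt_le_iff) auto
  thus "sqrt (log 2 (real k)) \<ge> 4" using l65536 by simp
qed

lemma pair_ok:
  fixes M :: "'a set"
  assumes fin: "finite M" and cM: "card M = k\<^sup>2 + 1" and SM: "S \<subseteq> M" and cS: "card S = k + 1"
    and mS: "m \<in> S" and kb: "k \<ge> 65536" and ka: "real k * sqrt (log 2 (real k)) \<le> a"
  shows "P_mS M k m \<in> distr_on M" "Q_S M k S \<in> distr_on M" "alpha_close M a (P_mS M k m) (Q_S M k S)"
proof -
  define K where "K = real k"
  define l where "l = log 2 (real k)"
  define s where "s = sqrt (log 2 (real k))"
  have K: "K \<ge> 65536" using kb unfolding K_def by simp
  have kf: "l \<ge> 16" "l < K" "s * s = l" "s \<ge> 4" using k_facts[OF kb] unfolding K_def l_def s_def by auto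
  have a': "K * s \<le> a" using ka unfolding K_def s_def .
  note nf = num_facts[OF K kf(1) kf(3) kf(4) kf(2) a']
  have mM: "m \<in> M" using mS SM by auto
  have Pv: "P_mS M k m x = (if x \<notin> M then 0 else if x = m then 1 - 1 / l else 1 / (K\<^sup>2 * l))" for x
    unfolding P_mS_def K_def l_def by simp
  have Qv: "Q_S M k S x = (if x \<notin> M then 0 else if x \<in> S then 1 / (K * s)
      else 1 / (K\<^sup>2 - K) * (1 - (K + 1) / (K * s)))" for x
    unfolding Q_S_def K_def s_def by simp
  show "alpha_close M a (P_mS M k m) (Q_S M k S)"
    unfolding alpha_close_def Pv Qv using nf mS by auto
  have cM1: "card (M - {m}) = k\<^sup>2" using cM mM fin by simp
  have Kpos: "K > 0" using K by simp
  have lpos: "l > 0" using kf by simp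
  have "sum (P_mS M k m) M = P_mS M k m m + sum (P_mS M k m) (M - {m})"
    using fin mM by (rule sum.remove)
  also have "sum (P_mS M k m) (M - {m}) = (\<Sum>x\<in>M - {m}. 1 / (K\<^sup>2 * l))"
    by (rule sum.cong) (auto simp: Pv)
  also have "\<dots> = K\<^sup>2 * (1 / (K\<^sup>2 * l))" using cM1 unfolding K_def by simp
  also have "\<dots> = 1 / l" using Kpos by simp
  finally have sP: "sum (P_mS M k m) M = 1" using mM by (simp add: Pv)
  show "P_mS M k m \<in> distr_on M" unfolding distr_on_def using sP nf by (auto simp: Pv)
  have cMS: "card (M - S) = k\<^sup>2 - k" using cM cS fin SM by (simp add: card_Diff_subset finite_subset)
  have kk: "k \<le> k\<^sup>2" by (simp add: power2_eq_square)
  have rMS: "real (card (M - S)) = K\<^sup>2 - K" using cMS kk unfolding K_def by (simp add: of_nat_diff)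
  have KK: "K\<^sup>2 - K \<noteq> 0" using K by (simp add: power2_eq_square)
  have "sum (Q_S M k S) M = sum (Q_S M k S) (M - S) + sum (Q_S M k S) S"
    using SM fin by (rule sum.subset_diff)
  also have "sum (Q_S M k S) (M - S) = (\<Sum>x\<in>M - S. 1 / (K\<^sup>2 - K) * (1 - (K + 1) / (K * s)))"
    by (rule sum.cong) (auto simp: Qv)
  also have "\<dots> = 1 - (K + 1) / (K * s)" using rMS KK by simp
  also have "sum (Q_S M k S) S = (\<Sum>x\<in>S. 1 / (K * s))"
    by (rule sum.cong) (use SM in \<open>auto simp: Qv\<close>)
  also have "\<dots> = (K + 1) / (K * s)" using cS unfolding K_def by simp
  finally have sQ: "sum (Q_S M k S) M = 1" by simp
  show "Q_S M k S \<in> distr_on M" unfolding distr_on_def using sQ nf by (auto simp: Qv)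
qed


lemma kof_facts:
  assumes "\<alpha> \<ge> (262144::nat)"
  shows "real (kof \<alpha>) * sqrt (log 2 (real (kof \<alpha>))) \<le> real \<alpha>" "kof \<alpha> \<ge> 65536"
proof -
  let ?P = "\<lambda>k::nat. real k * sqrt (log 2 (real k)) \<le> real \<alpha>"
  have bnd: "y \<le> \<alpha> + 1" if "?P y" for y
  proof (cases "y \<ge> 2")
    case True
    have "log 2 (real y) \<ge> log 2 2" using True by (subst log_le_cancel_iff) auto
    hence "sqrt (log 2 (real y)) \<ge> 1" by simp
    hence "real y \<le> real y * sqrt (log 2 (real y))" by (simp add: mult_le_cancel_left1)
    thus ?thesis using that by simp
  qed simp
  have P0: "?P 65536" using l65536 assms by simp
  show "?P (kof \<alpha>)" unfolding kof_def by (rule GreatestI_nat[where P="?P", OF P0 bnd])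
  show "kof \<alpha> \<ge> 65536" unfolding kof_def by (rule Greatest_le_nat[where P="?P", OF P0 bnd])
qed

lemma prob_coins: "prob_space coins"
  unfolding coins_def by (intro prob_space_PiM prob_space_measure_pmf)

lemma main_core:
  fixes M :: "'a set"
  assumes fin: "finite M" and cM: "card M = k\<^sup>2 + 1"
    and meas: "\<forall>x \<alpha>' P. (\<lambda>R. E x \<alpha>' R P) \<in> measurable coins (count_space UNIV)"
    and ef: "error_free_scheme M E D" and kb: "k \<ge> 65536"
    and ka: "real k * sqrt (log 2 (real k)) \<le> real \<alpha>"
  shows "\<exists>m S. m \<in> M \<and> S \<subseteq> M \<and> card S = k + 1 \<and> m \<in> S \<and>
      exp_len M E \<alpha> (P_mS M k m) \<ge> ennreal (2 * log 2 (real k) - 2 * log 2 (log 2 (real k)))"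
proof -
  define l where "l = log 2 (real k)"
  have kf: "l \<ge> 16" using k_facts[OF kb] unfolding l_def by auto
  define c where "c x R = E x \<alpha> R (P_mS M k x)" for x R
  define N where "N = k\<^sup>2 + 1"
  have k1: "k \<ge> 1" using kb by simp
  have inj: "inj_on (\<lambda>x. c x R) M" for R
  proof (rule inj_onI, rule ccontr)
    fix x y assume xM: "x \<in> M" and yM: "y \<in> M" and eq: "c x R = c y R" and ne: "x \<noteq> y"
    have "card (M - {x, y}) = k\<^sup>2 - 1" using cM xM yM ne fin by (simp add: card_Diff_subset)
    moreover have "k - 1 \<le> k\<^sup>2 - 1" using le_square[of k] by (simp add: power2_eq_square diff_le_mono)
    ultimately obtain T where T: "T \<subseteq> M - {x, y}" "card T = k - 1" "finite T"
      by (metis obtain_subset_with_card_n)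
    define S where "S = insert x (insert y T)"
    have SM: "S \<subseteq> M" using T xM yM unfolding S_def by auto
    have "x \<notin> T" "y \<notin> T" using T by auto
    hence cS: "card S = k + 1" unfolding S_def using T ne k1 by simp
    have xS: "x \<in> S" and yS: "y \<in> S" unfolding S_def by auto
    note px = pair_ok[OF fin cM SM cS xS kb ka] and py = pair_ok[OF fin cM SM cS yS kb ka]
    have "D (c x R) \<alpha> R (Q_S M k S) = x"
      using ef xM px unfolding error_free_scheme_def c_def by blast
    moreover have "D (c y R) \<alpha> R (Q_S M k S) = y"
      using ef yM py unfolding error_free_scheme_def c_def by blast
    ultimately show False using eq ne by simp
  qed
  define T where "T = nat \<lfloor>2 * l\<rfloor> - 1"
  have T1: "real (T + 1) = real_of_int \<lfloor>2 * l\<rfloor>" unfolding T_def using kf by simp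
  have TN: "(2::real) ^ (T + 1) \<le> real N"
  proof -
    have "(2::real) ^ (T + 1) = 2 powr (real (T + 1))" by (rule powr_realpow[symmetric]) simp
    also have "\<dots> \<le> 2 powr (2 * l)" using T1 by simp
    also have "\<dots> = (2 powr l)\<^sup>2" by (simp add: powr_powr[symmetric] power2_eq_square powr_add[symmetric])
    also have "2 powr l = real k" unfolding l_def using kb by simp
    finally show ?thesis unfolding N_def by simp
  qed
  have Tl: "real T \<ge> 2 * l - 2" using T1 by linarith
  have pw: "real (\<Sum>x\<in>M. length (c x R)) \<ge> (2 * l - 3) * real N" for R
  proof -
    have "real (\<Sum>x\<in>M. length (c x R)) \<ge> real T * card M - 2^(T+1)"
      by (rule sum_len_T[OF fin inj])
    moreover have "real T * card M - 2^(T+1) \<ge> (2 * l - 3) * real N"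
    proof -
      have "(2 * l - 3) * real N \<le> (real T - 1) * real N"
        by (rule mult_right_mono) (use Tl in auto)
      also have "\<dots> = real T * real N - real N" by (simp add: algebra_simps)
      finally show ?thesis using TN cM unfolding N_def by simp
    qed
    ultimately show ?thesis by linarith
  qed
  define I where "I x = (\<integral>\<^sup>+ R. ennreal (real (length (c x R))) \<partial>coins)" for x
  have mf: "(\<lambda>R. ennreal (real (length (c x R)))) \<in> borel_measurable coins" for x
  proof -
    have "(\<lambda>R. c x R) \<in> measurable coins (count_space UNIV)" using meas unfolding c_def by blast
    moreover have "(\<lambda>w::bool list. ennreal (real (length w))) \<in> borel_measurable (count_space UNIV)" by simp
    ultimately show ?thesis using measurable_compose by fastforce
  qed
  interpret prob_space coins by (rule prob_coins)
  have sumI: "(\<Sum>x\<in>M. I x) \<ge> ennreal ((2 * l - 3) * real N)"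
  proof -
    have "(\<Sum>x\<in>M. I x) = (\<integral>\<^sup>+ R. (\<Sum>x\<in>M. ennreal (real (length (c x R)))) \<partial>coins)"
      unfolding I_def by (rule nn_integral_sum[symmetric]) (rule mf)
    also have "\<dots> = (\<integral>\<^sup>+ R. ennreal (real (\<Sum>x\<in>M. length (c x R))) \<partial>coins)"
      by (simp add: sum_ennreal of_nat_sum)
    also have "\<dots> \<ge> (\<integral>\<^sup>+ R. ennreal ((2 * l - 3) * real N) \<partial>coins)"
      by (rule nn_integral_mono, rule ennreal_leI, use pw in \<open>simp add: of_nat_sum\<close>)
    ultimately show ?thesis by (simp add: emeasure_space_1)
  qed
  have Mne: "M \<noteq> {}" using cM by auto
  have "Max (I ` M) \<in> I ` M" using fin Mne by (intro Max_in) auto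
  then obtain m where mM: "m \<in> M" and mv: "Max (I ` M) = I m" by blast
  have mmax: "\<forall>x\<in>M. I x \<le> I m" unfolding mv[symmetric] using fin by (auto intro: Max_ge)
  have "ennreal (real N) * ennreal (2 * l - 3) \<le> ennreal (real N) * I m"
  proof -
    have "ennreal (real N) * ennreal (2 * l - 3) = ennreal ((2 * l - 3) * real N)"
      using kf by (simp add: ennreal_mult'' mult.commute)
    also have "\<dots> \<le> (\<Sum>x\<in>M. I x)" by (rule sumI)
    also have "\<dots> \<le> of_nat (card M) * I m" by (rule sum_bounded_above) (use mmax in auto)
    also have "of_nat (card M) = ennreal (real N)" unfolding N_def cM by (simp add: ennreal_of_nat_eq_real_of_nat)
    finally show ?thesis .
  qed
  hence Im: "ennreal (2 * l - 3) \<le> I m" unfolding N_def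
    by (subst (asm) ennreal_mult_le_mult_iff) auto
  have "card (M - {m}) = k\<^sup>2" using cM mM fin by simp
  moreover have "k \<le> k\<^sup>2" by (simp add: power2_eq_square)
  ultimately obtain T0 where T0: "T0 \<subseteq> M - {m}" "card T0 = k" "finite T0"
    by (metis obtain_subset_with_card_n)
  define S where "S = insert m T0"
  have SM: "S \<subseteq> M" using T0 mM unfolding S_def by auto
  have "m \<notin> T0" using T0 by auto
  hence cS: "card S = k + 1" unfolding S_def using T0 by simp
  have mS: "m \<in> S" unfolding S_def by auto
  have Pm: "P_mS M k m m = 1 - 1 / l" unfolding P_mS_def l_def using mM by simp
  have "exp_len M E \<alpha> (P_mS M k m) \<ge> ennreal (P_mS M k m m) * I m"
    unfolding exp_len_def I_def c_def by (rule member_le_sum) (use mM fin in auto)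
  moreover have "ennreal (P_mS M k m m) * I m \<ge> ennreal (1 - 1 / l) * ennreal (2 * l - 3)"
    unfolding Pm by (rule mult_left_mono[OF Im]) simp
  moreover have "ennreal (1 - 1 / l) * ennreal (2 * l - 3) \<ge> ennreal (2 * l - 2 * log 2 l)"
  proof -
    have l0: "l > 0" using kf by simp
    have "log 2 l \<ge> 4"
    proof -
      have "log 2 16 \<le> log 2 l" using kf by (subst log_le_cancel_iff) auto
      moreover have "log 2 (16::real) = 4"
      proof -
        have "log 2 ((2::real)^4) = 4" by (subst log_nat_power) simp_all
        thus ?thesis by simp
      qed
      ultimately show ?thesis by simp
    qed
    moreover have "(1 - 1 / l) * (2 * l - 3) = 2 * l - 5 + 3 / l" using l0 by (simp add: field_simps)
    moreover have "3 / l \<ge> 0" using l0 by simp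
    ultimately have "2 * l - 2 * log 2 l \<le> (1 - 1 / l) * (2 * l - 3)" by linarith
    hence "ennreal (2 * l - 2 * log 2 l) \<le> ennreal ((1 - 1 / l) * (2 * l - 3))" by (rule ennreal_leI)
    also have "\<dots> = ennreal (1 - 1 / l) * ennreal (2 * l - 3)" using kf by (subst ennreal_mult) auto
    finally show ?thesis .
  qed
  ultimately have "exp_len M E \<alpha> (P_mS M k m) \<ge> ennreal (2 * l - 2 * log 2 l)" by (meson order_trans)
  thus ?thesis using mM SM cS mS unfolding l_def by blast
qed

theorem mainTheorem4:
  shows "\<exists>\<alpha>0::nat. \<forall>\<alpha>\<ge>\<alpha>0. \<forall>(M::'a set) E D.
           finite M \<and> card M = (kof \<alpha>)\<^sup>2 + 1 \<and>
           (\<forall>x \<alpha>' P. (\<lambda>R. E x \<alpha>' R P) \<in> measurable coins (count_space UNIV)) \<and>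
           error_free_scheme M E D \<longrightarrow>
           (\<exists>(P, Q)\<in>family M \<alpha>.
              exp_len M E \<alpha> P \<ge> ennreal (2 * log 2 (real (kof \<alpha>)) - 2 * log 2 (log 2 (real (kof \<alpha>)))))"
proof (rule exI[of _ 262144], intro allI impI)
  fix \<alpha> :: nat and M :: "'a set" and E D
  assume a0: "262144 \<le> \<alpha>"
  assume h: "finite M \<and> card M = (kof \<alpha>)\<^sup>2 + 1 \<and>
           (\<forall>x \<alpha>' P. (\<lambda>R. E x \<alpha>' R P) \<in> measurable coins (count_space UNIV)) \<and>
           error_free_scheme M E D"
  obtain m S where mS: "m \<in> M" "S \<subseteq> M" "card S = kof \<alpha> + 1" "m \<in> S"
    and ex: "exp_len M E \<alpha> (P_mS M (kof \<alpha>) m) \<ge> ennreal (2 * log 2 (real (kof \<alpha>)) - 2 * log 2 (log 2 (real (kof \<alpha>))))"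
    using main_core[of M "kof \<alpha>" E D \<alpha>] h kof_facts[OF a0] by blast
  have "(P_mS M (kof \<alpha>) m, Q_S M (kof \<alpha>) S) \<in> family M \<alpha>"
    unfolding family_def using mS by blast
  thus "\<exists>(P, Q)\<in>family M \<alpha>.
              exp_len M E \<alpha> P \<ge> ennreal (2 * log 2 (real (kof \<alpha>)) - 2 * log 2 (log 2 (real (kof \<alpha>))))"
    using ex by blast
qed

end
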